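(* Let $k,l\ge1$ with $k\ne l$ and $1\le r\le(2k+1)(2l+1)$. Let $\overline{\mathcal{B}}(2k+1,2l+1;r)$ be the subset of $\mathcal{B}(2k+1,2l+1;r)$ consisting of boards whose board partition $\begin{pmatrix}\lambda_1&\lambda_2&\lambda_3&\lambda_4\\ \delta_1&\delta_2&\delta_3&\delta_4\end{pmatrix}_c$ satisfies: (i) $\lambda_1\ge\lambda_i$ for all $i>1$; (ii) if $\lambda_1=\lambda_3$ then $\lambda_2\ge\lambda_4$; if in addition $\lambda_2=\lambda_4$ then $\delta_1\ge\delta_3$; and if further $\delta_1=\delta_3$ then $\delta_2\ge\delta_4$; (iii) if $\lambda_1=\lambda_2$ then $\lambda_3\ge\lambda_4$; if in addition $\lambda_3=\lambda_4$ then $\delta_2\ge\delta_4$; (iv) if $\lambda_1=\lambda_4$ then $\lambda_2\ge\lambda_3$; if in addition $\lambda_2=\lambda_3$ then $\delta_1\ge\delta_3$. Then: (1) $\overline{\mathcal{B}}(2k+1,2l+1;r)$ is a disjoint union of sets each consisting of all boards in $\mathcal{B}(2k+1,2l+1;r)$ with some fixed board partition; (2) every board of $\mathcal{B}(2k+1,2l+1;r)$ is equivalent under $\langle H,V\rangle$ to some board of $\overline{\mathcal{B}}(2k+1,2l+1;r)$; (3) if two boards of $\overline{\mathcal{B}}(2k+1,2l+1;r)$ are equivalent under $\langle H,V\rangle$, they have the same board partition.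
   Context: A $(2k+1)\times(2l+1)$ grid ($2k+1$ rows numbered top to bottom, $2l+1$ columns numbered left to right); $\mathcal{B}(2k+1,2l+1;r)$ is the set of boards, i.e. subsets of exactly $r$ blocked cells. The symmetry group is $\langle H,V\rangle=\{R_0,H,V,R_{180}\}$ ($H$: reflection across the horizontal midline; $V$: across the vertical midline; $R_{180}$: 180-degree rotation); boards are equivalent if some element maps one to the other. The grid is divided into nine regions: $\Lambda_1$ = rows $1..k$, cols $1..l$; $\Lambda_2$ = rows $1..k$, cols $l+2..2l+1$; $\Lambda_3$ = rows $k+2..2k+1$, cols $l+2..2l+1$; $\Lambda_4$ = rows $k+2..2k+1$, cols $1..l$; $\Delta_1$ = rows $1..k$, col $l+1$; $\Delta_2$ = row $k+1$, cols $l+2..2l+1$; $\Delta_3$ = rows $k+2..2k+1$, col $l+1$; $\Delta_4$ = row $k+1$, cols $1..l$; and the center cell $(k+1,l+1)$. The board partition $\begin{pmatrix}\lambda_1&\lambda_2&\lambda_3&\lambda_4\\ \delta_1&\delta_2&\delta_3&\delta_4\end{pmatrix}_c$ records the numbers of blocked cells $\lambda_i$ in $\Lambda_i$, $\delta_i$ in $\Delta_i$, and $c\in\{0,1\}$ at the center. *)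

theory Defs
  imports Main "HOL-Library.Disjoint_Sets"
begin

type_synonym cell = "nat \<times> nat"   (* (row, column), 1-based *)

definition grid :: "nat \<Rightarrow> nat \<Rightarrow> cell set" where
  "grid k l = {1..2*k+1} \<times> {1..2*l+1}"

definition boards :: "nat \<Rightarrow> nat \<Rightarrow> nat \<Rightarrow> cell set set" where
  "boards k l r = {B. B \<subseteq> grid k l \<and> card B = r}"

definition reflH :: "nat \<Rightarrow> nat \<Rightarrow> cell \<Rightarrow> cell" where
  "reflH k l = (\<lambda>(i,j). (2*k+2-i, j))"
definition reflV :: "nat \<Rightarrow> nat \<Rightarrow> cell \<Rightarrow> cell" where
  "reflV k l = (\<lambda>(i,j). (i, 2*l+2-j))"
definition rot180 :: "nat \<Rightarrow> nat \<Rightarrow> cell \<Rightarrow> cell" where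
  "rot180 k l = (\<lambda>(i,j). (2*k+2-i, 2*l+2-j))"

definition symHV :: "nat \<Rightarrow> nat \<Rightarrow> (cell \<Rightarrow> cell) set" where
  "symHV k l = {id, reflH k l, reflV k l, rot180 k l}"

definition equivHV :: "nat \<Rightarrow> nat \<Rightarrow> cell set \<Rightarrow> cell set \<Rightarrow> bool" where
  "equivHV k l B B' \<longleftrightarrow> (\<exists>g \<in> symHV k l. g ` B = B')"

definition Lam1 :: "nat \<Rightarrow> nat \<Rightarrow> cell set" where "Lam1 k l = {1..k} \<times> {1..l}"
definition Lam2 :: "nat \<Rightarrow> nat \<Rightarrow> cell set" where "Lam2 k l = {1..k} \<times> {l+2..2*l+1}"
definition Lam3 :: "nat \<Rightarrow> nat \<Rightarrow> cell set" where "Lam3 k l = {k+2..2*k+1} \<times> {l+2..2*l+1}"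
definition Lam4 :: "nat \<Rightarrow> nat \<Rightarrow> cell set" where "Lam4 k l = {k+2..2*k+1} \<times> {1..l}"
definition Del1 :: "nat \<Rightarrow> nat \<Rightarrow> cell set" where "Del1 k l = {1..k} \<times> {l+1}"
definition Del2 :: "nat \<Rightarrow> nat \<Rightarrow> cell set" where "Del2 k l = {k+1} \<times> {l+2..2*l+1}"
definition Del3 :: "nat \<Rightarrow> nat \<Rightarrow> cell set" where "Del3 k l = {k+2..2*k+1} \<times> {l+1}"
definition Del4 :: "nat \<Rightarrow> nat \<Rightarrow> cell set" where "Del4 k l = {k+1} \<times> {1..l}"
definition Cen :: "nat \<Rightarrow> nat \<Rightarrow> cell set" where "Cen k l = {(k+1, l+1)}"

definition board_partition ::
  "nat \<Rightarrow> nat \<Rightarrow> cell set \<Rightarrow> (nat \<times> nat \<times> nat \<times> nat) \<times> (nat \<times> nat \<times> nat \<times> nat) \<times> nat" where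
  "board_partition k l B =
     ((card (B \<inter> Lam1 k l), card (B \<inter> Lam2 k l), card (B \<inter> Lam3 k l), card (B \<inter> Lam4 k l)),
      (card (B \<inter> Del1 k l), card (B \<inter> Del2 k l), card (B \<inter> Del3 k l), card (B \<inter> Del4 k l)),
      card (B \<inter> Cen k l))"

definition canonical_partition ::
  "(nat \<times> nat \<times> nat \<times> nat) \<times> (nat \<times> nat \<times> nat \<times> nat) \<times> nat \<Rightarrow> bool" where
  "canonical_partition P = (case P of ((l1,l2,l3,l4),(d1,d2,d3,d4),c) \<Rightarrow>
     (l1 \<ge> l2 \<and> l1 \<ge> l3 \<and> l1 \<ge> l4) \<and>
     (l1 = l3 \<longrightarrow> l2 \<ge> l4 \<and> (l2 = l4 \<longrightarrow> d1 \<ge> d3 \<and> (d1 = d3 \<longrightarrow> d2 \<ge> d4))) \<and>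
     (l1 = l2 \<longrightarrow> l3 \<ge> l4 \<and> (l3 = l4 \<longrightarrow> d2 \<ge> d4)) \<and>
     (l1 = l4 \<longrightarrow> l2 \<ge> l3 \<and> (l2 = l3 \<longrightarrow> d1 \<ge> d3)))"

definition boards_bar :: "nat \<Rightarrow> nat \<Rightarrow> nat \<Rightarrow> cell set set" where
  "boards_bar k l r = {B \<in> boards k l r. canonical_partition (board_partition k l B)}"

definition partition_class ::
  "nat \<Rightarrow> nat \<Rightarrow> nat \<Rightarrow> (nat \<times> nat \<times> nat \<times> nat) \<times> (nat \<times> nat \<times> nat \<times> nat) \<times> nat \<Rightarrow> cell set set" where
  "partition_class k l r P = {B \<in> boards k l r. board_partition k l B = P}"

end

theory Submission
  imports Defs
begin

lemma inv_img:
  assumes "\<And>x. x \<in> B \<Longrightarrow> g (g x) = x" "g ` A \<subseteq> B" "g ` B \<subseteq> A"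
  shows "g ` A = B"
proof
  show "g ` A \<subseteq> B" by fact
  show "B \<subseteq> g ` A"
  proof
    fix x assume "x \<in> B"
    then have "x = g (g x)" "g x \<in> A" using assms by auto
    then show "x \<in> g ` A" by blast
  qed
qed

lemmas regs = Lam1_def Lam2_def Lam3_def Lam4_def Del1_def Del2_def Del3_def Del4_def Cen_def grid_def

lemma H_inv: "x \<in> grid k l \<Longrightarrow> reflH k l (reflH k l x) = x"
  by (cases x) (auto simp: reflH_def grid_def)
lemma V_inv: "x \<in> grid k l \<Longrightarrow> reflV k l (reflV k l x) = x"
  by (cases x) (auto simp: reflV_def grid_def)
lemma R_inv: "x \<in> grid k l \<Longrightarrow> rot180 k l (rot180 k l x) = x"
  by (cases x) (auto simp: rot180_def grid_def)

lemma H_inj: "inj_on (reflH k l) (grid k l)"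
  by (metis H_inv inj_on_inverseI)
lemma V_inj: "inj_on (reflV k l) (grid k l)"
  by (metis V_inv inj_on_inverseI)
lemma R_inj: "inj_on (rot180 k l) (grid k l)"
  by (metis R_inv inj_on_inverseI)

lemma H_grid: "reflH k l ` grid k l \<subseteq> grid k l" by (auto simp: reflH_def grid_def)
lemma V_grid: "reflV k l ` grid k l \<subseteq> grid k l" by (auto simp: reflV_def grid_def)
lemma R_grid: "rot180 k l ` grid k l \<subseteq> grid k l" by (auto simp: rot180_def grid_def)

lemma sub_grid: "Lam1 k l \<subseteq> grid k l" "Lam2 k l \<subseteq> grid k l" "Lam3 k l \<subseteq> grid k l" "Lam4 k l \<subseteq> grid k l"
  "Del1 k l \<subseteq> grid k l" "Del2 k l \<subseteq> grid k l" "Del3 k l \<subseteq> grid k l" "Del4 k l \<subseteq> grid k l" "Cen k l \<subseteq> grid k l"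
  by (auto simp: regs)

lemma inv_img': assumes "\<And>x. x \<in> grid k l \<Longrightarrow> g (g x) = x" "B \<subseteq> grid k l" "g ` A \<subseteq> B" "g ` B \<subseteq> A"
  shows "g ` A = B" using assms by (intro inv_img) auto

lemma H_img:
  "reflH k l ` Lam1 k l = Lam4 k l" "reflH k l ` Lam4 k l = Lam1 k l"
  "reflH k l ` Lam2 k l = Lam3 k l" "reflH k l ` Lam3 k l = Lam2 k l"
  "reflH k l ` Del1 k l = Del3 k l" "reflH k l ` Del3 k l = Del1 k l"
  "reflH k l ` Del2 k l = Del2 k l" "reflH k l ` Del4 k l = Del4 k l" "reflH k l ` Cen k l = Cen k l"
  by (rule inv_img'[OF H_inv], (force simp: regs reflH_def)+)+

lemma V_img:
  "reflV k l ` Lam2 k l = Lam1 k l" "reflV k l ` Lam1 k l = Lam2 k l"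
  "reflV k l ` Lam4 k l = Lam3 k l" "reflV k l ` Lam3 k l = Lam4 k l"
  "reflV k l ` Del1 k l = Del1 k l" "reflV k l ` Del3 k l = Del3 k l"
  "reflV k l ` Del4 k l = Del2 k l" "reflV k l ` Del2 k l = Del4 k l" "reflV k l ` Cen k l = Cen k l"
  by (rule inv_img'[OF V_inv], (force simp: regs reflV_def)+)+

lemma R_img:
  "rot180 k l ` Lam3 k l = Lam1 k l" "rot180 k l ` Lam4 k l = Lam2 k l"
  "rot180 k l ` Lam1 k l = Lam3 k l" "rot180 k l ` Lam2 k l = Lam4 k l"
  "rot180 k l ` Del3 k l = Del1 k l" "rot180 k l ` Del4 k l = Del2 k l"
  "rot180 k l ` Del1 k l = Del3 k l" "rot180 k l ` Del2 k l = Del4 k l" "rot180 k l ` Cen k l = Cen k l"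
  by (rule inv_img'[OF R_inv], (force simp: regs rot180_def)+)+

lemma img_card:
  assumes "inj_on g (grid k l)" "B \<subseteq> grid k l" "A \<subseteq> grid k l" "g ` A = A'"
  shows "card (g ` B \<inter> A') = card (B \<inter> A)"
proof -
  have 1: "g ` (B \<inter> A) = g ` B \<inter> g ` A" by (rule inj_on_image_Int[OF assms(1,2,3)])
  have 2: "g ` B \<inter> A' = g ` (B \<inter> A)" unfolding 1 assms(4) ..
  have "B \<inter> A \<subseteq> grid k l" using assms(2) by (rule subset_trans[rotated]) (rule Int_lower1)
  then have 3: "inj_on g (B \<inter> A)" by (rule inj_on_subset[OF assms(1)])
  show ?thesis unfolding 2 by (rule card_image[OF 3])
qed

definition pH :: "(nat \<times> nat \<times> nat \<times> nat) \<times> (nat \<times> nat \<times> nat \<times> nat) \<times> nat \<Rightarrow> _" where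
  "pH P = (case P of ((a,b,c,d),(e,f,g,h),z) \<Rightarrow> ((d,c,b,a),(g,f,e,h),z))"
definition pV :: "(nat \<times> nat \<times> nat \<times> nat) \<times> (nat \<times> nat \<times> nat \<times> nat) \<times> nat \<Rightarrow> _" where
  "pV P = (case P of ((a,b,c,d),(e,f,g,h),z) \<Rightarrow> ((b,a,d,c),(e,h,g,f),z))"
definition pR :: "(nat \<times> nat \<times> nat \<times> nat) \<times> (nat \<times> nat \<times> nat \<times> nat) \<times> nat \<Rightarrow> _" where
  "pR P = (case P of ((a,b,c,d),(e,f,g,h),z) \<Rightarrow> ((c,d,a,b),(g,h,e,f),z))"

lemma bp_H: assumes Bg: "B \<subseteq> grid k l" shows "board_partition k l (reflH k l ` B) = pH (board_partition k l B)"
proof -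
  have e1: "card (reflH k l ` B \<inter> Lam1 k l) = card (B \<inter> Lam4 k l)"
    by (rule img_card[OF H_inj Bg sub_grid(4)]) (rule H_img)
  have e2: "card (reflH k l ` B \<inter> Lam2 k l) = card (B \<inter> Lam3 k l)"
    by (rule img_card[OF H_inj Bg sub_grid(3)]) (rule H_img)
  have e3: "card (reflH k l ` B \<inter> Lam3 k l) = card (B \<inter> Lam2 k l)"
    by (rule img_card[OF H_inj Bg sub_grid(2)]) (rule H_img)
  have e4: "card (reflH k l ` B \<inter> Lam4 k l) = card (B \<inter> Lam1 k l)"
    by (rule img_card[OF H_inj Bg sub_grid(1)]) (rule H_img)
  have e5: "card (reflH k l ` B \<inter> Del1 k l) = card (B \<inter> Del3 k l)"
    by (rule img_card[OF H_inj Bg sub_grid(7)]) (rule H_img)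
  have e6: "card (reflH k l ` B \<inter> Del2 k l) = card (B \<inter> Del2 k l)"
    by (rule img_card[OF H_inj Bg sub_grid(6)]) (rule H_img)
  have e7: "card (reflH k l ` B \<inter> Del3 k l) = card (B \<inter> Del1 k l)"
    by (rule img_card[OF H_inj Bg sub_grid(5)]) (rule H_img)
  have e8: "card (reflH k l ` B \<inter> Del4 k l) = card (B \<inter> Del4 k l)"
    by (rule img_card[OF H_inj Bg sub_grid(8)]) (rule H_img)
  have e9: "card (reflH k l ` B \<inter> Cen k l) = card (B \<inter> Cen k l)"
    by (rule img_card[OF H_inj Bg sub_grid(9)]) (rule H_img)
  show ?thesis unfolding board_partition_def pH_def e1 e2 e3 e4 e5 e6 e7 e8 e9 by simp
qed

lemma bp_V: assumes Bg: "B \<subseteq> grid k l" shows "board_partition k l (reflV k l ` B) = pV (board_partition k l B)"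
proof -
  have e1: "card (reflV k l ` B \<inter> Lam1 k l) = card (B \<inter> Lam2 k l)"
    by (rule img_card[OF V_inj Bg sub_grid(2)]) (rule V_img)
  have e2: "card (reflV k l ` B \<inter> Lam2 k l) = card (B \<inter> Lam1 k l)"
    by (rule img_card[OF V_inj Bg sub_grid(1)]) (rule V_img)
  have e3: "card (reflV k l ` B \<inter> Lam3 k l) = card (B \<inter> Lam4 k l)"
    by (rule img_card[OF V_inj Bg sub_grid(4)]) (rule V_img)
  have e4: "card (reflV k l ` B \<inter> Lam4 k l) = card (B \<inter> Lam3 k l)"
    by (rule img_card[OF V_inj Bg sub_grid(3)]) (rule V_img)
  have e5: "card (reflV k l ` B \<inter> Del1 k l) = card (B \<inter> Del1 k l)"
    by (rule img_card[OF V_inj Bg sub_grid(5)]) (rule V_img)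
  have e6: "card (reflV k l ` B \<inter> Del2 k l) = card (B \<inter> Del4 k l)"
    by (rule img_card[OF V_inj Bg sub_grid(8)]) (rule V_img)
  have e7: "card (reflV k l ` B \<inter> Del3 k l) = card (B \<inter> Del3 k l)"
    by (rule img_card[OF V_inj Bg sub_grid(7)]) (rule V_img)
  have e8: "card (reflV k l ` B \<inter> Del4 k l) = card (B \<inter> Del2 k l)"
    by (rule img_card[OF V_inj Bg sub_grid(6)]) (rule V_img)
  have e9: "card (reflV k l ` B \<inter> Cen k l) = card (B \<inter> Cen k l)"
    by (rule img_card[OF V_inj Bg sub_grid(9)]) (rule V_img)
  show ?thesis unfolding board_partition_def pV_def e1 e2 e3 e4 e5 e6 e7 e8 e9 by simp
qed

lemma bp_R: assumes Bg: "B \<subseteq> grid k l" shows "board_partition k l (rot180 k l ` B) = pR (board_partition k l B)"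
proof -
  have e1: "card (rot180 k l ` B \<inter> Lam1 k l) = card (B \<inter> Lam3 k l)"
    by (rule img_card[OF R_inj Bg sub_grid(3)]) (rule R_img)
  have e2: "card (rot180 k l ` B \<inter> Lam2 k l) = card (B \<inter> Lam4 k l)"
    by (rule img_card[OF R_inj Bg sub_grid(4)]) (rule R_img)
  have e3: "card (rot180 k l ` B \<inter> Lam3 k l) = card (B \<inter> Lam1 k l)"
    by (rule img_card[OF R_inj Bg sub_grid(1)]) (rule R_img)
  have e4: "card (rot180 k l ` B \<inter> Lam4 k l) = card (B \<inter> Lam2 k l)"
    by (rule img_card[OF R_inj Bg sub_grid(2)]) (rule R_img)
  have e5: "card (rot180 k l ` B \<inter> Del1 k l) = card (B \<inter> Del3 k l)"
    by (rule img_card[OF R_inj Bg sub_grid(7)]) (rule R_img)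
  have e6: "card (rot180 k l ` B \<inter> Del2 k l) = card (B \<inter> Del4 k l)"
    by (rule img_card[OF R_inj Bg sub_grid(8)]) (rule R_img)
  have e7: "card (rot180 k l ` B \<inter> Del3 k l) = card (B \<inter> Del1 k l)"
    by (rule img_card[OF R_inj Bg sub_grid(5)]) (rule R_img)
  have e8: "card (rot180 k l ` B \<inter> Del4 k l) = card (B \<inter> Del2 k l)"
    by (rule img_card[OF R_inj Bg sub_grid(6)]) (rule R_img)
  have e9: "card (rot180 k l ` B \<inter> Cen k l) = card (B \<inter> Cen k l)"
    by (rule img_card[OF R_inj Bg sub_grid(9)]) (rule R_img)
  show ?thesis unfolding board_partition_def pR_def e1 e2 e3 e4 e5 e6 e7 e8 e9 by simp
qed

definition cp :: "nat \<Rightarrow> nat \<Rightarrow> nat \<Rightarrow> nat \<Rightarrow> nat \<Rightarrow> nat \<Rightarrow> nat \<Rightarrow> nat \<Rightarrow> bool" where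
 "cp l1 l2 l3 l4 d1 d2 d3 d4 = ((l1 \<ge> l2 \<and> l1 \<ge> l3 \<and> l1 \<ge> l4) \<and>
     (l1 = l3 \<longrightarrow> l2 \<ge> l4 \<and> (l2 = l4 \<longrightarrow> d1 \<ge> d3 \<and> (d1 = d3 \<longrightarrow> d2 \<ge> d4))) \<and>
     (l1 = l2 \<longrightarrow> l3 \<ge> l4 \<and> (l3 = l4 \<longrightarrow> d2 \<ge> d4)) \<and>
     (l1 = l4 \<longrightarrow> l2 \<ge> l3 \<and> (l2 = l3 \<longrightarrow> d1 \<ge> d3)))"
lemma cp_L: "b \<le> a \<Longrightarrow> c \<le> a \<Longrightarrow> d \<le> a \<Longrightarrow>
   cp a b c d e f g h \<or> cp d c b a g f e h \<or> cp b a d c e h g f \<or> cp c d a b g h e f"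
  unfolding cp_def
  by (cases "b = a"; cases "c = a"; cases "d = a"; simp; cases "e = g"; cases "f = h"; cases "b = d"; cases "b = c"; cases "c = d"; simp; linarith)
lemma cp_ex: "cp a b c d e f g h \<or> cp d c b a g f e h \<or> cp b a d c e h g f \<or> cp c d a b g h e f"
proof -
  have "(b \<le> a \<and> c \<le> a \<and> d \<le> a) \<or> (a \<le> b \<and> c \<le> b \<and> d \<le> b) \<or> (a \<le> c \<and> b \<le> c \<and> d \<le> c) \<or> (a \<le> d \<and> b \<le> d \<and> c \<le> d)"
    by linarith
  then show ?thesis
    using cp_L[of b a c d e f g h] cp_L[of a b d c e h g f] cp_L[of d c a b g h e f] cp_L[of c d b a g f e h]
    by blast
qed

lemma cpP: "canonical_partition ((a,b,c,d),(e,f,g,h),z) = cp a b c d e f g h"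
  by (simp add: canonical_partition_def cp_def)

lemma exists_canon: "canonical_partition P \<or> canonical_partition (pH P) \<or> canonical_partition (pV P) \<or> canonical_partition (pR P)"
proof -
  obtain a b c d e f g h z where "P = ((a,b,c,d),(e,f,g,h),z)" by (metis prod.exhaust)
  then show ?thesis using cp_ex[of a b c d e f g h]
    by (simp add: cpP pH_def pV_def pR_def)
qed


lemma cpD:
  assumes "cp l1 l2 l3 l4 d1 d2 d3 d4"
  shows "l2 \<le> l1" "l3 \<le> l1" "l4 \<le> l1"
    "l1 = l3 \<Longrightarrow> l4 \<le> l2" "l1 = l3 \<Longrightarrow> l2 = l4 \<Longrightarrow> d3 \<le> d1"
    "l1 = l3 \<Longrightarrow> l2 = l4 \<Longrightarrow> d1 = d3 \<Longrightarrow> d4 \<le> d2"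
    "l1 = l2 \<Longrightarrow> l4 \<le> l3" "l1 = l2 \<Longrightarrow> l3 = l4 \<Longrightarrow> d4 \<le> d2"
    "l1 = l4 \<Longrightarrow> l3 \<le> l2" "l1 = l4 \<Longrightarrow> l2 = l3 \<Longrightarrow> d3 \<le> d1"
  using assms unfolding cp_def by auto

lemma cpH: assumes A: "cp a b c d e f g h" and B: "cp d c b a g f e h" shows "d = a \<and> c = b \<and> g = e"
proof -
  have 1: "d = a" using cpD(3)[OF A] cpD(3)[OF B] by simp
  have 2: "c = b" using cpD(9)[OF A 1[symmetric]] cpD(9)[OF B 1] by simp
  have "g = e" using cpD(10)[OF A 1[symmetric] 2[symmetric]] cpD(10)[OF B 1 2] by simp
  then show ?thesis using 1 2 by simp
qed
lemma cpV: assumes A: "cp a b c d e f g h" and B: "cp b a d c e h g f" shows "b = a \<and> d = c \<and> h = f"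
proof -
  have 1: "b = a" using cpD(1)[OF A] cpD(1)[OF B] by simp
  have 2: "d = c" using cpD(7)[OF A 1[symmetric]] cpD(7)[OF B 1] by simp
  have "h = f" using cpD(8)[OF A 1[symmetric] 2[symmetric]] cpD(8)[OF B 1 2] by simp
  then show ?thesis using 1 2 by simp
qed
lemma cpR: assumes A: "cp a b c d e f g h" and B: "cp c d a b g h e f" shows "c = a \<and> d = b \<and> g = e \<and> h = f"
proof -
  have 1: "c = a" using cpD(2)[OF A] cpD(2)[OF B] by simp
  have 2: "d = b" using cpD(4)[OF A 1[symmetric]] cpD(4)[OF B 1] by simp
  have 3: "g = e" using cpD(5)[OF A 1[symmetric] 2[symmetric]] cpD(5)[OF B 1 2] by simp
  have "h = f" using cpD(6)[OF A 1[symmetric] 2[symmetric] 3[symmetric]] cpD(6)[OF B 1 2 3] by simp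
  then show ?thesis using 1 2 3 by simp
qed

lemma canon_H: assumes A: "canonical_partition P" and B: "canonical_partition (pH P)" shows "pH P = P"
proof -
  obtain a b c d e f g h z where P: "P = ((a,b,c,d),(e,f,g,h),z)" by (metis prod.exhaust)
  have 1: "cp a b c d e f g h" using A unfolding P cpP .
  have 2: "cp d c b a g f e h" using B unfolding P pH_def by (simp add: cpP)
  show ?thesis using cpH[OF 1 2] unfolding P pH_def by simp
qed

lemma canon_V: assumes A: "canonical_partition P" and B: "canonical_partition (pV P)" shows "pV P = P"
proof -
  obtain a b c d e f g h z where P: "P = ((a,b,c,d),(e,f,g,h),z)" by (metis prod.exhaust)
  have 1: "cp a b c d e f g h" using A unfolding P cpP .
  have 2: "cp b a d c e h g f" using B unfolding P pV_def by (simp add: cpP)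
  show ?thesis using cpV[OF 1 2] unfolding P pV_def by simp
qed

lemma canon_R: assumes A: "canonical_partition P" and B: "canonical_partition (pR P)" shows "pR P = P"
proof -
  obtain a b c d e f g h z where P: "P = ((a,b,c,d),(e,f,g,h),z)" by (metis prod.exhaust)
  have 1: "cp a b c d e f g h" using A unfolding P cpP .
  have 2: "cp c d a b g h e f" using B unfolding P pR_def by (simp add: cpP)
  show ?thesis using cpR[OF 1 2] unfolding P pR_def by simp
qed

lemma boards_img:
  assumes "B \<in> boards k l r" "g \<in> symHV k l"
  shows "g ` B \<in> boards k l r"
proof -
  have B: "B \<subseteq> grid k l" "card B = r" using assms(1) by (simp_all add: boards_def)
  have gs: "g = id \<or> g = reflH k l \<or> g = reflV k l \<or> g = rot180 k l"
    using assms(2) unfolding symHV_def by simp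
  have inj: "inj_on g (grid k l)"
    using gs by (elim disjE) (simp_all add: H_inj V_inj R_inj)
  have sub: "g ` grid k l \<subseteq> grid k l"
    using gs by (elim disjE) (simp_all add: H_grid V_grid R_grid)
  have 1: "g ` B \<subseteq> grid k l" using image_mono[OF B(1), of g] sub by (rule subset_trans)
  have 2: "card (g ` B) = r" using card_image[OF inj_on_subset[OF inj B(1)]] B(2) by simp
  show ?thesis using 1 2 by (simp add: boards_def)
qed

theorem theorem4p7:
  fixes k l r :: nat
  assumes "k \<ge> 1" and "l \<ge> 1" and "k \<noteq> l"
    and "1 \<le> r" and "r \<le> (2*k+1)*(2*l+1)"
  shows "(\<exists>\<P>. boards_bar k l r = \<Union> (partition_class k l r ` \<P>)
              \<and> disjoint_family_on (partition_class k l r) \<P>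
              \<and> (\<forall>P\<in>\<P>. partition_class k l r P \<noteq> {}))
       \<and> (\<forall>B \<in> boards k l r. \<exists>B' \<in> boards_bar k l r. equivHV k l B B')
       \<and> (\<forall>B \<in> boards_bar k l r. \<forall>B' \<in> boards_bar k l r.
            equivHV k l B B' \<longrightarrow> board_partition k l B = board_partition k l B')"
proof (intro conjI)
  let ?Q = "board_partition k l ` boards_bar k l r"
  show "\<exists>\<P>. boards_bar k l r = \<Union> (partition_class k l r ` \<P>)
              \<and> disjoint_family_on (partition_class k l r) \<P>
              \<and> (\<forall>P\<in>\<P>. partition_class k l r P \<noteq> {})"
  proof (intro exI[of _ ?Q] conjI)
    show "boards_bar k l r = \<Union> (partition_class k l r ` ?Q)"
      by (auto simp: boards_bar_def partition_class_def)
    show "disjoint_family_on (partition_class k l r) ?Q"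
      by (auto simp: disjoint_family_on_def partition_class_def)
    show "\<forall>P\<in>?Q. partition_class k l r P \<noteq> {}"
      by (auto simp: boards_bar_def partition_class_def)
  qed
  show "\<forall>B \<in> boards k l r. \<exists>B' \<in> boards_bar k l r. equivHV k l B B'"
  proof
    fix B assume B: "B \<in> boards k l r"
    then have Bg: "B \<subseteq> grid k l" by (simp add: boards_def)
    have mem: "g ` B \<in> boards k l r" if "g \<in> symHV k l" for g using boards_img[OF B that] .
    have eq: "equivHV k l B (g ` B)" if "g \<in> symHV k l" for g using that by (auto simp: equivHV_def)
    have s: "id \<in> symHV k l" "reflH k l \<in> symHV k l" "reflV k l \<in> symHV k l" "rot180 k l \<in> symHV k l"
      by (auto simp: symHV_def)
    from exists_canon[of "board_partition k l B"]
    show "\<exists>B' \<in> boards_bar k l r. equivHV k l B B'"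
    proof (elim disjE)
      assume "canonical_partition (board_partition k l B)"
      then have "canonical_partition (board_partition k l ((id) ` B))" by simp
      then have "(id) ` B \<in> boards_bar k l r" using mem[OF s(1)] unfolding boards_bar_def by blast
      then show ?thesis using eq[OF s(1)] by blast
    next
      assume "canonical_partition (pH (board_partition k l B))"
      then have "canonical_partition (board_partition k l ((reflH k l) ` B))" using bp_H[OF Bg] by simp
      then have "(reflH k l) ` B \<in> boards_bar k l r" using mem[OF s(2)] unfolding boards_bar_def by blast
      then show ?thesis using eq[OF s(2)] by blast
    next
      assume "canonical_partition (pV (board_partition k l B))"
      then have "canonical_partition (board_partition k l ((reflV k l) ` B))" using bp_V[OF Bg] by simp
      then have "(reflV k l) ` B \<in> boards_bar k l r" using mem[OF s(3)] unfolding boards_bar_def by blast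
      then show ?thesis using eq[OF s(3)] by blast
    next
      assume "canonical_partition (pR (board_partition k l B))"
      then have "canonical_partition (board_partition k l ((rot180 k l) ` B))" using bp_R[OF Bg] by simp
      then have "(rot180 k l) ` B \<in> boards_bar k l r" using mem[OF s(4)] unfolding boards_bar_def by blast
      then show ?thesis using eq[OF s(4)] by blast
    qed
  qed
  show "\<forall>B \<in> boards_bar k l r. \<forall>B' \<in> boards_bar k l r.
            equivHV k l B B' \<longrightarrow> board_partition k l B = board_partition k l B'"
  proof (intro ballI impI)
    fix B B' assume B: "B \<in> boards_bar k l r" and B': "B' \<in> boards_bar k l r" and e: "equivHV k l B B'"
    have Bg: "B \<subseteq> grid k l" using B by (simp add: boards_bar_def boards_def)
    have c: "canonical_partition (board_partition k l B)" "canonical_partition (board_partition k l B')"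
      using B B' by (auto simp: boards_bar_def)
    from e obtain g where g: "g \<in> symHV k l" "g ` B = B'" by (auto simp: equivHV_def)
    from g(1) show "board_partition k l B = board_partition k l B'"
      unfolding symHV_def
    proof (elim insertE emptyE)
      assume "g = id" then show ?thesis using g by simp
    next
      assume "g = reflH k l" then have "board_partition k l B' = pH (board_partition k l B)" using g(2) bp_H[OF Bg] by simp
      then show ?thesis using canon_H[OF c(1)] c(2) by simp
    next
      assume "g = reflV k l" then have "board_partition k l B' = pV (board_partition k l B)" using g(2) bp_V[OF Bg] by simp
      then show ?thesis using canon_V[OF c(1)] c(2) by simp
    next
      assume "g = rot180 k l" then have "board_partition k l B' = pR (board_partition k l B)" using g(2) bp_R[OF Bg] by simp
      then show ?thesis using canon_R[OF c(1)] c(2) by simp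
    qed
  qed
qed

end
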